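(* Let $\mathcal{T}=(C,B,A)$ and $\mathcal{T}'=(C',B',A')$ be $m\times(n,m,m)$ triples, and define the $m\times(n+2m)$ polynomial matrices $\mathcal{T}(x,y)=[C\ \ xI_m+B\ \ yI_m+A]$ and $\mathcal{T}'(x,y)=[C'\ \ xI_m+B'\ \ yI_m+A']$ in indeterminates $x,y$. Then $\mathcal{T}$ and $\mathcal{T}'$ are feedback similar if and only if there exist nonsingular complex matrices $S\in\mathbb{C}^{m\times m}$ and $R\in\mathbb{C}^{(n+2m)\times(n+2m)}$ such that $S\,\mathcal{T}'(x,y)=\mathcal{T}(x,y)\,R$.
   Context: An $m\times(n,m,m)$ triple is $(C,B,A)$ with $C\in\mathbb{C}^{m\times n}$, $B,A\in\mathbb{C}^{m\times m}$. Two such triples are feedback similar if $[C'\ B'\ A']=S^{-1}[C\ B\ A]\begin{bmatrix}P&V&U\\0&S&0\\0&0&S\end{bmatrix}$ for some $U,V\in\mathbb{C}^{n\times m}$ and nonsingular $P\in\mathbb{C}^{n\times n}$, $S\in\mathbb{C}^{m\times m}$. *)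

theory Defs
  imports "Jordan_Normal_Form.Matrix" "HOL-Computational_Algebra.Polynomial"
begin

definition hcat :: "'a mat \<Rightarrow> 'a mat \<Rightarrow> 'a mat" where
  "hcat A B = mat (dim_row A) (dim_col A + dim_col B)
     (\<lambda>(i,j). if j < dim_col A then A $$ (i,j) else B $$ (i, j - dim_col A))"

definition is_triple :: "nat \<Rightarrow> nat \<Rightarrow> complex mat \<Rightarrow> complex mat \<Rightarrow> complex mat \<Rightarrow> bool" where
  "is_triple m n C B A \<longleftrightarrow>
     C \<in> carrier_mat m n \<and> B \<in> carrier_mat m m \<and> A \<in> carrier_mat m m"

text \<open>Feedback similarity:
  [C' B' A'] = S^{-1} [C B A] [[P,V,U],[0,S,0],[0,0,S]], written equivalently as
  S [C' B' A'] = [C B A] [[P,V,U],[0,S,0],[0,0,S]] with S nonsingular.\<close>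
definition feedback_similar ::
  "nat \<Rightarrow> nat \<Rightarrow> complex mat \<Rightarrow> complex mat \<Rightarrow> complex mat
       \<Rightarrow> complex mat \<Rightarrow> complex mat \<Rightarrow> complex mat \<Rightarrow> bool" where
  "feedback_similar m n C B A C' B' A' \<longleftrightarrow>
     (\<exists>P S U V. P \<in> carrier_mat n n \<and> invertible_mat P \<and>
        S \<in> carrier_mat m m \<and> invertible_mat S \<and>
        U \<in> carrier_mat n m \<and> V \<in> carrier_mat n m \<and>
        S * hcat C' (hcat B' A') =
          hcat C (hcat B A) *
          four_block_mat P (hcat V U)
            (0\<^sub>m (2*m) n) (four_block_mat S (0\<^sub>m m m) (0\<^sub>m m m) S))"

text \<open>Bivariate polynomials over the complex numbers are modelled as
  complex poly poly: the inner variable is x, the outer variable is y.\<close>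
definition const2 :: "complex \<Rightarrow> complex poly poly" where
  "const2 c = [:[:c:]:]"

definition X2 :: "complex poly poly" where "X2 = [:[:0, 1:]:]"
definition Y2 :: "complex poly poly" where "Y2 = [:0, 1:]"

definition triple_pmat ::
  "nat \<Rightarrow> complex mat \<Rightarrow> complex mat \<Rightarrow> complex mat \<Rightarrow> complex poly poly mat" where
  "triple_pmat m C B A =
     hcat (map_mat const2 C)
       (hcat (X2 \<cdot>\<^sub>m 1\<^sub>m m + map_mat const2 B) (Y2 \<cdot>\<^sub>m 1\<^sub>m m + map_mat const2 A))"

end

theory Submission imports Defs "Jordan_Normal_Form.Determinant" begin
definition h :: "complex \<Rightarrow> complex \<Rightarrow> complex \<Rightarrow> complex poly poly" where
 "h a b c = [:[:a,b:],[:c:]:]"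
lemma h_add: "h a b c + h a' b' c' = h (a+a') (b+b') (c+c')"
  by (simp add: h_def)
lemma h_0: "h 0 0 0 = 0" by (simp add: h_def)
lemma h_sum: "(\<Sum>k\<in>K. h (a k) (b k) (c k)) = h (\<Sum>k\<in>K. a k) (\<Sum>k\<in>K. b k) (\<Sum>k\<in>K. c k)"
  by (induct K rule: infinite_finite_induct) (auto simp: h_0 h_add)
lemma h_lmult: "const2 s * h a b c = h (s*a) (s*b) (s*c)"
  by (simp add: h_def const2_def)
lemma h_rmult: "h a b c * const2 s = h (a*s) (b*s) (c*s)"
  by (simp add: h_def const2_def mult.commute)
lemma h_inj: "h a b c = h a' b' c' \<longleftrightarrow> a = a' \<and> b = b' \<and> c = c'"
  by (simp add: h_def)
lemma h_lits: "const2 b = h b 0 0" "X2 * 1 + const2 b = h b 1 0" "X2 * 0 + const2 b = h b 0 0"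
  "Y2 * 1 + const2 b = h b 0 1" "Y2 * 0 + const2 b = h b 0 0"
  "X2 + h b 0 0 = h b 1 0" "Y2 + h b 0 0 = h b 0 1"
  by (simp_all add: h_def const2_def X2_def Y2_def)

definition G :: "nat \<Rightarrow> nat \<Rightarrow> complex mat \<Rightarrow> complex mat \<Rightarrow> complex mat \<Rightarrow> complex poly poly mat" where
  "G r c K0 K1 K2 = mat r c (\<lambda>(i,j). h (K0$$(i,j)) (K1$$(i,j)) (K2$$(i,j)))"

lemma G_lmult:
  assumes S: "S \<in> carrier_mat r r'" and K: "K0 \<in> carrier_mat r' c" "K1 \<in> carrier_mat r' c" "K2 \<in> carrier_mat r' c"
  shows "map_mat const2 S * G r' c K0 K1 K2 = G r c (S*K0) (S*K1) (S*K2)"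
  apply (rule eq_matI)
  using S K by (auto simp: G_def scalar_prod_def h_lmult h_sum)

lemma G_rmult:
  assumes R: "R \<in> carrier_mat c c'" and K: "K0 \<in> carrier_mat r c" "K1 \<in> carrier_mat r c" "K2 \<in> carrier_mat r c"
  shows "G r c K0 K1 K2 * map_mat const2 R = G r c' (K0*R) (K1*R) (K2*R)"
  apply (rule eq_matI)
  using R K by (auto simp: G_def scalar_prod_def h_rmult h_sum)

lemma G_eq:
  assumes "K0 \<in> carrier_mat r c" "K1 \<in> carrier_mat r c" "K2 \<in> carrier_mat r c"
   "L0 \<in> carrier_mat r c" "L1 \<in> carrier_mat r c" "L2 \<in> carrier_mat r c"
  shows "G r c K0 K1 K2 = G r c L0 L1 L2 \<longleftrightarrow> K0 = L0 \<and> K1 = L1 \<and> K2 = L2"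
proof
  assume eq: "G r c K0 K1 K2 = G r c L0 L1 L2"
  have "\<And>i j. i < r \<Longrightarrow> j < c \<Longrightarrow> K0$$(i,j) = L0$$(i,j) \<and> K1$$(i,j) = L1$$(i,j) \<and> K2$$(i,j) = L2$$(i,j)"
  proof -
    fix i j assume "i < r" "j < c"
    from arg_cong[OF eq, of "\<lambda>M. M $$ (i,j)"] this show "K0$$(i,j) = L0$$(i,j) \<and> K1$$(i,j) = L1$$(i,j) \<and> K2$$(i,j) = L2$$(i,j)"
      by (simp add: G_def h_inj)
  qed
  then show "K0 = L0 \<and> K1 = L1 \<and> K2 = L2" using assms by (auto intro!: eq_matI)
qed simp

lemma hcat_index [simp]: "i < dim_row A \<Longrightarrow> j < dim_col A + dim_col B \<Longrightarrow>
  hcat A B $$ (i,j) = (if j < dim_col A then A$$(i,j) else B$$(i,j-dim_col A))"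
  by (simp add: hcat_def)
lemma hcat_dims [simp]: "dim_row (hcat A B) = dim_row A" "dim_col (hcat A B) = dim_col A + dim_col B"
  by (simp_all add: hcat_def)
lemma hcat_carrier: "A \<in> carrier_mat r c \<Longrightarrow> B \<in> carrier_mat r d \<Longrightarrow> hcat A B \<in> carrier_mat r (c+d)"
  unfolding carrier_mat_def by auto

definition E2 :: "nat \<Rightarrow> nat \<Rightarrow> complex mat" where
  "E2 m n = hcat (0\<^sub>m m n) (hcat (1\<^sub>m m) (0\<^sub>m m m))"
definition E3 :: "nat \<Rightarrow> nat \<Rightarrow> complex mat" where
  "E3 m n = hcat (0\<^sub>m m n) (hcat (0\<^sub>m m m) (1\<^sub>m m))"

lemma E_carrier: "E2 m n \<in> carrier_mat m (n+2*m)" "E3 m n \<in> carrier_mat m (n+2*m)"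
  unfolding E2_def E3_def mult_2
  by (rule hcat_carrier[OF zero_carrier_mat hcat_carrier[OF one_carrier_mat zero_carrier_mat]],
      rule hcat_carrier[OF zero_carrier_mat hcat_carrier[OF zero_carrier_mat one_carrier_mat]])

lemma triple_G:
  assumes "is_triple m n C B A"
  shows "triple_pmat m C B A = G m (n+2*m) (hcat C (hcat B A)) (E2 m n) (E3 m n)"
proof (rule eq_matI)
  have C: "C \<in> carrier_mat m n" and B: "B \<in> carrier_mat m m" and A: "A \<in> carrier_mat m m"
    using assms by (auto simp: is_triple_def)
  fix i j assume i: "i < dim_row (G m (n+2*m) (hcat C (hcat B A)) (E2 m n) (E3 m n))"
    and j: "j < dim_col (G m (n+2*m) (hcat C (hcat B A)) (E2 m n) (E3 m n))"
  then have i: "i < m" and j: "j < n + 2*m" by (auto simp: G_def)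
  have R: "G m (n+2*m) (hcat C (hcat B A)) (E2 m n) (E3 m n) $$ (i,j) =
     h (hcat C (hcat B A) $$ (i,j)) (E2 m n $$ (i,j)) (E3 m n $$ (i,j))"
    using i j by (simp add: G_def)
  show "triple_pmat m C B A $$ (i, j) = G m (n+2*m) (hcat C (hcat B A)) (E2 m n) (E3 m n) $$ (i, j)"
    unfolding R
  proof (cases "j < n")
    case True
    then show "triple_pmat m C B A $$ (i, j) = h (hcat C (hcat B A) $$ (i,j)) (E2 m n $$ (i,j)) (E3 m n $$ (i,j))"
      using i j C B A by (simp add: triple_pmat_def E2_def E3_def h_lits)
  next
    case False
    show "triple_pmat m C B A $$ (i, j) = h (hcat C (hcat B A) $$ (i,j)) (E2 m n $$ (i,j)) (E3 m n $$ (i,j))"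
    proof (cases "j < n + m")
      case True
      then have "j - n < m" using False by arith
      with True show ?thesis
      using i j C B A False by (simp add: triple_pmat_def E2_def E3_def h_lits)
    next
      case F2: False
      then have "j - n - m < m" "\<not> j - n < m" using j by arith+
      with F2 show ?thesis
      using i j C B A False by (simp add: triple_pmat_def E2_def E3_def h_lits)
    qed
  qed
qed (insert assms, auto simp: triple_pmat_def G_def is_triple_def)
lemma row_E2: "i < m \<Longrightarrow> row (E2 m n) i = unit_vec (n+2*m) (n+i)"
  by (rule eq_vecI) (auto simp: E2_def unit_vec_def)
lemma row_E3: "i < m \<Longrightarrow> row (E3 m n) i = unit_vec (n+2*m) (n+m+i)"
  by (rule eq_vecI) (auto simp: E3_def unit_vec_def)
lemma col_E2: "j < n+2*m \<Longrightarrow> col (E2 m n) j = (if n \<le> j \<and> j < n+m then unit_vec m (j-n) else 0\<^sub>v m)"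
  by (rule eq_vecI) (auto simp: E2_def unit_vec_def)
lemma col_E3: "j < n+2*m \<Longrightarrow> col (E3 m n) j = (if n+m \<le> j then unit_vec m (j-n-m) else 0\<^sub>v m)"
  by (rule eq_vecI) (auto simp: E3_def unit_vec_def)

lemma E2R: "R \<in> carrier_mat (n+2*m) c \<Longrightarrow> i < m \<Longrightarrow> j < c \<Longrightarrow> (E2 m n * R) $$ (i,j) = R $$ (n+i,j)"
  using E_carrier[of m n] by (simp add: row_E2)
lemma E3R: "R \<in> carrier_mat (n+2*m) c \<Longrightarrow> i < m \<Longrightarrow> j < c \<Longrightarrow> (E3 m n * R) $$ (i,j) = R $$ (n+m+i,j)"
  using E_carrier[of m n] by (simp add: row_E3)
lemma SE2: "S \<in> carrier_mat m m \<Longrightarrow> i < m \<Longrightarrow> j < n+2*m \<Longrightarrow>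
   (S * E2 m n) $$ (i,j) = (if n \<le> j \<and> j < n+m then S $$ (i,j-n) else 0)"
  using E_carrier[of m n] by (auto simp: col_E2)
lemma SE3: "S \<in> carrier_mat m m \<Longrightarrow> i < m \<Longrightarrow> j < n+2*m \<Longrightarrow>
   (S * E3 m n) $$ (i,j) = (if n+m \<le> j then S $$ (i,j-n-m) else 0)"
  using E_carrier[of m n] by (auto simp: col_E3)

lemma inv_det: assumes A: "(A :: complex mat) \<in> carrier_mat k k"
  shows "invertible_mat A \<longleftrightarrow> det A \<noteq> 0"
proof
  assume "invertible_mat A"
  then obtain B where AB: "A * B = 1\<^sub>m (dim_row A)" and BA: "B * A = 1\<^sub>m (dim_row B)"
    unfolding invertible_mat_def inverts_mat_def by blast
  have "dim_col B = k" using arg_cong[OF AB, of dim_col] A by simp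
  moreover have "dim_row B = k" using arg_cong[OF BA, of dim_col] A by simp
  ultimately have B: "B \<in> carrier_mat k k" by auto
  from arg_cong[OF AB, of det] A have "det A * det B = 1" using det_mult[OF A B] by simp
  then show "det A \<noteq> 0" by auto
next
  assume "det A \<noteq> 0"
  from det_non_zero_imp_unit[OF A this] obtain B where B: "B \<in> carrier_mat k k" and
    "A * B = 1\<^sub>m k" "B * A = 1\<^sub>m k"
    unfolding Units_def ring_mat_def by auto
  then show "invertible_mat A" using A unfolding invertible_mat_def inverts_mat_def square_mat.simps
    by auto
qed

definition M :: "nat \<Rightarrow> nat \<Rightarrow> complex mat \<Rightarrow> complex mat \<Rightarrow> complex mat \<Rightarrow> complex mat \<Rightarrow> complex mat" where
  "M m n P V U S = four_block_mat P (hcat V U) (0\<^sub>m (2*m) n) (four_block_mat S (0\<^sub>m m m) (0\<^sub>m m m) S)"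

lemma M_carrier: "P \<in> carrier_mat n n \<Longrightarrow> S \<in> carrier_mat m m \<Longrightarrow> M m n P V U S \<in> carrier_mat (n+2*m) (n+2*m)"
  unfolding M_def using four_block_carrier_mat[of P n n "four_block_mat S (0\<^sub>m m m) (0\<^sub>m m m) S" "m+m" "m+m"]
  by (simp add: mult_2)

lemma M_index:
  assumes "P \<in> carrier_mat n n" "S \<in> carrier_mat m m" "V \<in> carrier_mat n m" "U \<in> carrier_mat n m"
    and i: "i < n+2*m" and j: "j < n+2*m"
  shows "M m n P V U S $$ (i,j) = (if i < n then (if j < n then P$$(i,j) else if j < n+m then V$$(i,j-n) else U$$(i,j-n-m))
     else if i < n+m then (if n \<le> j \<and> j < n+m then S$$(i-n,j-n) else 0)
     else (if n+m \<le> j then S$$(i-n-m,j-n-m) else 0))"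
  using assms unfolding M_def mult_2 by auto

lemma det_M: assumes "P \<in> carrier_mat n n" "S \<in> carrier_mat m m" "V \<in> carrier_mat n m" "U \<in> carrier_mat n m"
  shows "det (M m n P V U S) = det P * (det S * det S)"
proof -
  have 1: "det (four_block_mat S (0\<^sub>m m m) (0\<^sub>m m m) S) = det S * det S"
    by (rule det_four_block_mat_lower_left_zero) (use assms in auto)
  show ?thesis unfolding M_def
    by (subst det_four_block_mat_lower_left_zero[of P n _ "m+m"]) (use assms 1 hcat_carrier in \<open>auto simp: mult_2\<close>)
qed
lemma eq_iff:
  assumes T: "is_triple m n C B A" and T': "is_triple m n C' B' A'"
    and S: "S \<in> carrier_mat m m" and R: "R \<in> carrier_mat (n+2*m) (n+2*m)"
  shows "map_mat const2 S * triple_pmat m C' B' A' = triple_pmat m C B A * map_mat const2 R \<longleftrightarrow>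
    S * hcat C' (hcat B' A') = hcat C (hcat B A) * R \<and> S * E2 m n = E2 m n * R \<and> S * E3 m n = E3 m n * R"
proof -
  have K: "hcat C (hcat B A) \<in> carrier_mat m (n+2*m)" "hcat C' (hcat B' A') \<in> carrier_mat m (n+2*m)"
    using T T' unfolding is_triple_def mult_2 by (auto intro!: hcat_carrier)
  show ?thesis
    unfolding triple_G[OF T] triple_G[OF T']
    apply (subst G_lmult[OF S K(2) E_carrier])
    apply (subst G_rmult[OF R K(1) E_carrier])
    apply (rule G_eq)
    using S R K E_carrier[of m n] by auto
qed

lemma block_iff:
  assumes S: "S \<in> carrier_mat m m" and R: "R \<in> carrier_mat (n+2*m) (n+2*m)"
  shows "(S * E2 m n = E2 m n * R \<and> S * E3 m n = E3 m n * R) \<longleftrightarrow>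
    (\<exists>P V U. P \<in> carrier_mat n n \<and> V \<in> carrier_mat n m \<and> U \<in> carrier_mat n m \<and> R = M m n P V U S)"
proof
  assume "S * E2 m n = E2 m n * R \<and> S * E3 m n = E3 m n * R"
  then have e2: "S * E2 m n = E2 m n * R" and e3: "S * E3 m n = E3 m n * R" by auto
  have r2: "R $$ (i,j) = (if n \<le> j \<and> j < n+m then S $$ (i-n,j-n) else 0)"
    if "n \<le> i" "i < n+m" "j < n+2*m" for i j
  proof -
    have "R $$ (i,j) = (E2 m n * R) $$ (i-n,j)" using E2R[OF R, of "i-n" j] that by simp
    also have "\<dots> = (S * E2 m n) $$ (i-n,j)" using e2 by simp
    finally show ?thesis using SE2[OF S, of "i-n" j] that by simp
  qed
  have r3: "R $$ (i,j) = (if n+m \<le> j then S $$ (i-n-m,j-n-m) else 0)"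
    if "n+m \<le> i" "i < n+2*m" "j < n+2*m" for i j
  proof -
    have "R $$ (i,j) = (E3 m n * R) $$ (i-n-m,j)" using E3R[OF R, of "i-n-m" j] that by simp
    also have "\<dots> = (S * E3 m n) $$ (i-n-m,j)" using e3 by simp
    finally show ?thesis using SE3[OF S, of "i-n-m" j] that by simp
  qed
  define P where "P = mat n n (\<lambda>(i,j). R $$ (i,j))"
  define V where "V = mat n m (\<lambda>(i,j). R $$ (i,n+j))"
  define U where "U = mat n m (\<lambda>(i,j). R $$ (i,n+m+j))"
  have PVU: "P \<in> carrier_mat n n" "V \<in> carrier_mat n m" "U \<in> carrier_mat n m"
    by (auto simp: P_def V_def U_def)
  have MC: "M m n P V U S \<in> carrier_mat (n+2*m) (n+2*m)" by (rule M_carrier[OF PVU(1) S])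
  have "R = M m n P V U S"
  proof (rule eq_matI)
    fix i j assume "i < dim_row (M m n P V U S)" "j < dim_col (M m n P V U S)"
    then have i: "i < n+2*m" and j: "j < n+2*m" using MC by auto
    show "R $$ (i,j) = M m n P V U S $$ (i,j)"
    proof (cases "i < n")
      case True
      then show ?thesis using i j S PVU unfolding M_index[OF PVU(1) S PVU(2,3) i j]
        by (auto simp: P_def V_def U_def)
    next
      case False
      show ?thesis
      proof (cases "i < n+m")
        case True
        then show ?thesis using False i j S r2[of i j] unfolding M_index[OF PVU(1) S PVU(2,3) i j] by auto
      next
        case F2: False
        then show ?thesis using False i j S r3[of i j] unfolding M_index[OF PVU(1) S PVU(2,3) i j] by auto
      qed
    qed
  qed (use R MC in auto)
  then show "\<exists>P V U. P \<in> carrier_mat n n \<and> V \<in> carrier_mat n m \<and> U \<in> carrier_mat n m \<and> R = M m n P V U S"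
    using PVU by blast
next
  assume "\<exists>P V U. P \<in> carrier_mat n n \<and> V \<in> carrier_mat n m \<and> U \<in> carrier_mat n m \<and> R = M m n P V U S"
  then obtain P V U where PVU: "P \<in> carrier_mat n n" "V \<in> carrier_mat n m" "U \<in> carrier_mat n m"
    and RM: "R = M m n P V U S" by blast
  have "S * E2 m n = E2 m n * R"
  proof (rule eq_matI)
    fix i j assume "i < dim_row (E2 m n * R)" "j < dim_col (E2 m n * R)"
    then have i: "i < m" and j: "j < n+2*m" using R E_carrier[of m n] by auto
    show "(S * E2 m n) $$ (i,j) = (E2 m n * R) $$ (i,j)"
      unfolding SE2[OF S i j] E2R[OF R i j] unfolding RM using i j S PVU by (subst M_index) auto
  qed (use R S E_carrier[of m n] in auto)
  moreover have "S * E3 m n = E3 m n * R"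
  proof (rule eq_matI)
    fix i j assume "i < dim_row (E3 m n * R)" "j < dim_col (E3 m n * R)"
    then have i: "i < m" and j: "j < n+2*m" using R E_carrier[of m n] by auto
    show "(S * E3 m n) $$ (i,j) = (E3 m n * R) $$ (i,j)"
      unfolding SE3[OF S i j] E3R[OF R i j] unfolding RM using i j S PVU by (subst M_index) auto
  qed (use R S E_carrier[of m n] in auto)
  ultimately show "S * E2 m n = E2 m n * R \<and> S * E3 m n = E3 m n * R" by blast
qed

theorem lemma12:
  fixes m n :: nat and C B A C' B' A' :: "complex mat"
  assumes "is_triple m n C B A" and "is_triple m n C' B' A'"
  shows "feedback_similar m n C B A C' B' A' \<longleftrightarrow>
    (\<exists>S R. S \<in> carrier_mat m m \<and> invertible_mat S \<and>
       R \<in> carrier_mat (n + 2*m) (n + 2*m) \<and> invertible_mat R \<and>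
       map_mat const2 S * triple_pmat m C' B' A' = triple_pmat m C B A * map_mat const2 R)"
proof
  assume "feedback_similar m n C B A C' B' A'"
  then obtain P S U V where P: "P \<in> carrier_mat n n" "invertible_mat P" and
    S: "S \<in> carrier_mat m m" "invertible_mat S" and UV: "U \<in> carrier_mat n m" "V \<in> carrier_mat n m"
    and eq: "S * hcat C' (hcat B' A') = hcat C (hcat B A) * M m n P V U S"
    unfolding feedback_similar_def M_def by blast
  let ?R = "M m n P V U S"
  have R: "?R \<in> carrier_mat (n+2*m) (n+2*m)" using M_carrier[OF P(1) S(1)] .
  have "det ?R \<noteq> 0" using det_M[OF P(1) S(1) UV(2) UV(1)] inv_det[OF P(1)] inv_det[OF S(1)] P S by simp
  then have Ri: "invertible_mat ?R" using inv_det[OF R] by simp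
  have "S * E2 m n = E2 m n * ?R \<and> S * E3 m n = E3 m n * ?R"
    using block_iff[OF S(1) R] P UV by blast
  then have "map_mat const2 S * triple_pmat m C' B' A' = triple_pmat m C B A * map_mat const2 ?R"
    using eq_iff[OF assms S(1) R] eq by simp
  then show "\<exists>S R. S \<in> carrier_mat m m \<and> invertible_mat S \<and>
       R \<in> carrier_mat (n + 2*m) (n + 2*m) \<and> invertible_mat R \<and>
       map_mat const2 S * triple_pmat m C' B' A' = triple_pmat m C B A * map_mat const2 R"
    using S R Ri by blast
next
  assume "\<exists>S R. S \<in> carrier_mat m m \<and> invertible_mat S \<and>
       R \<in> carrier_mat (n + 2*m) (n + 2*m) \<and> invertible_mat R \<and>
       map_mat const2 S * triple_pmat m C' B' A' = triple_pmat m C B A * map_mat const2 R"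
  then obtain S R where S: "S \<in> carrier_mat m m" "invertible_mat S" and
    R: "R \<in> carrier_mat (n + 2*m) (n + 2*m)" "invertible_mat R" and
    eq: "map_mat const2 S * triple_pmat m C' B' A' = triple_pmat m C B A * map_mat const2 R" by blast
  from eq_iff[OF assms S(1) R(1)] eq have e0: "S * hcat C' (hcat B' A') = hcat C (hcat B A) * R"
    and blk: "S * E2 m n = E2 m n * R \<and> S * E3 m n = E3 m n * R" by auto
  from block_iff[OF S(1) R(1)] blk obtain P V U where PVU: "P \<in> carrier_mat n n" "V \<in> carrier_mat n m" "U \<in> carrier_mat n m"
    and RM: "R = M m n P V U S" by blast
  have "det R \<noteq> 0" using inv_det[OF R(1)] R(2) by simp
  then have "det P \<noteq> 0" unfolding RM det_M[OF PVU(1) S(1) PVU(2) PVU(3)] by auto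
  then have Pi: "invertible_mat P" using inv_det[OF PVU(1)] by simp
  show "feedback_similar m n C B A C' B' A'"
    unfolding feedback_similar_def using PVU Pi S e0[unfolded RM M_def] by blast
qed
end
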